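(* Let $\kappa<\Gamma$ be infinite cardinals. Then the Banach space $X_0^{\kappa,\Gamma}=\{f\in\ell_\infty(\Gamma):\exists A\subseteq\Gamma,\ |A|=\kappa,\ f|_{\Gamma\setminus A}\equiv 0\}$ (with the sup norm) fails the ball fixed point property.
   Context: $\ell_\infty(\Gamma)$ is the Banach space of bounded functions $\Gamma\to\mathbb{R}$ with the sup norm, where the cardinal $\Gamma$ is identified with the set of ordinals below it. A real Banach space $X$ has the ball fixed point property (BFPP) if every nonexpansive map $T\colon B_X\to B_X$ (i.e. $\|Tx-Ty\|\le\|x-y\|$) has a fixed point, where $B_X$ is the closed unit ball. *)

theory Defs
  imports Complex_Main
begin

definition supnorm :: "('g \<Rightarrow> real) \<Rightarrow> real" where
  "supnorm f = (SUP x. \<bar>f x\<bar>)"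

definition linf :: "('g \<Rightarrow> real) set" where
  "linf = {f. bdd_above (range (\<lambda>x. \<bar>f x\<bar>))}"

text \<open>The space X_0^{kappa,Gamma}, kappa given as the cardinality of the type 'k,
  Gamma as the cardinality of the type 'g.\<close>
definition X0 :: "'k itself \<Rightarrow> ('g \<Rightarrow> real) set" where
  "X0 _ = {f \<in> linf. \<exists>A :: 'g set.
       (card_of A, card_of (UNIV :: 'k set)) \<in> ordIso \<and> (\<forall>x. x \<notin> A \<longrightarrow> f x = 0)}"

definition unit_ball :: "('g \<Rightarrow> real) set \<Rightarrow> ('g \<Rightarrow> real) set" where
  "unit_ball X = {f \<in> X. supnorm f \<le> 1}"

definition nonexpansive_on :: "('g \<Rightarrow> real) set \<Rightarrow> (('g \<Rightarrow> real) \<Rightarrow> ('g \<Rightarrow> real)) \<Rightarrow> bool" where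
  "nonexpansive_on B T \<longleftrightarrow> (\<forall>f\<in>B. \<forall>g\<in>B. supnorm (T f - T g) \<le> supnorm (f - g))"

definition BFPP :: "('g \<Rightarrow> real) set \<Rightarrow> bool" where
  "BFPP X \<longleftrightarrow> (\<forall>T. T ` unit_ball X \<subseteq> unit_ball X \<and> nonexpansive_on (unit_ball X) T
      \<longrightarrow> (\<exists>f\<in>unit_ball X. T f = f))"

end

theory Submission
  imports Defs
begin

unbundle cardinal_syntax

definition ltr :: "'g rel \<Rightarrow> 'g \<Rightarrow> 'g \<Rightarrow> bool" where
  "ltr r y x \<longleftrightarrow> (y, x) \<in> r - Id"

definition Vs :: "'g rel \<Rightarrow> ('g \<Rightarrow> real) \<Rightarrow> 'g \<Rightarrow> 'g \<Rightarrow> real" where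
  "Vs r f x y = Sup ((\<lambda>z. \<bar>f z\<bar>) ` {z. \<not> ltr r z y \<and> ltr r z x})"

definition Tm :: "'g rel \<Rightarrow> ('g \<Rightarrow> real) \<Rightarrow> 'g \<Rightarrow> real" where
  "Tm r f x = (if \<forall>y. \<not> ltr r y x then 1 else Inf (Vs r f x ` {y. ltr r y x}))"

lemma lt_trans:
  assumes wo: "well_order_on UNIV r" and "ltr r a b" "ltr r b c"
  shows "ltr r a c"
  using assms unfolding well_order_on_def linear_order_on_def partial_order_on_def
    preorder_on_def trans_def antisym_def ltr_def by blast

lemma lt_total:
  assumes wo: "well_order_on UNIV r" and "a \<noteq> b"
  shows "ltr r a b \<or> ltr r b a"
  using assms unfolding well_order_on_def linear_order_on_def total_on_def ltr_def by blast

lemma lt_asym: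
  assumes wo: "well_order_on UNIV r" and "ltr r a b"
  shows "\<not> ltr r b a"
  using assms unfolding well_order_on_def linear_order_on_def partial_order_on_def
    antisym_def ltr_def by blast

lemma lt_irrefl[simp]: "\<not> ltr r a a"
  unfolding ltr_def by blast

lemma lt_wf:
  assumes wo: "well_order_on UNIV r"
  shows "wf {(y, x). ltr r y x}"
proof -
  have "{(y, x). ltr r y x} = r - Id" unfolding ltr_def by auto
  thus ?thesis using wo unfolding well_order_on_def by simp
qed

lemma lt_min:
  assumes wo: "well_order_on UNIV r" and "s0 \<in> Q"
  shows "\<exists>s\<in>Q. \<forall>t\<in>Q. \<not> ltr r t s"
proof -
  obtain z where z: "z \<in> Q" "\<And>y. (y, z) \<in> {(y, x). ltr r y x} \<Longrightarrow> y \<notin> Q"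
    by (rule wfE_min[OF lt_wf[OF wo] assms(2)]) blast
  show ?thesis
  proof (rule bexI[OF _ z(1)])
    show "\<forall>t\<in>Q. \<not> ltr r t z" using z(2) by blast
  qed
qed

lemma Vs_bounds:
  assumes "\<forall>z. \<bar>f z\<bar> \<le> 1" "ltr r y x"
  shows "0 \<le> Vs r f x y \<and> Vs r f x y \<le> 1"
proof -
  let ?Z = "{z. \<not> ltr r z y \<and> ltr r z x}"
  have ne: "y \<in> ?Z" using assms(2) by simp
  have nE: "?Z \<noteq> {}" using ne by blast
  have bdd: "bdd_above ((\<lambda>z. \<bar>f z\<bar>) ` ?Z)" using assms(1) by (intro bdd_aboveI[where M=1]) auto
  have "\<bar>f y\<bar> \<le> Vs r f x y" unfolding Vs_def using cSUP_upper[OF ne bdd] .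
  moreover have "Vs r f x y \<le> 1" unfolding Vs_def
    using assms(1) by (intro cSUP_least[OF nE]) auto
  ultimately show ?thesis by auto
qed

lemma Tm_bounds:
  assumes "\<forall>z. \<bar>f z\<bar> \<le> 1"
  shows "0 \<le> Tm r f x \<and> Tm r f x \<le> 1"
proof (cases "\<forall>y. \<not> ltr r y x")
  case True
  then show ?thesis unfolding Tm_def by simp
next
  case False
  then obtain y0 where y0: "ltr r y0 x" by auto
  have bdd: "bdd_below (Vs r f x ` {y. ltr r y x})"
    using Vs_bounds[OF assms] by (auto intro!: bdd_belowI[where m=0])
  have "Inf (Vs r f x ` {y. ltr r y x}) \<le> Vs r f x y0"
    using cINF_lower[OF bdd] y0 by auto
  moreover have "0 \<le> Inf (Vs r f x ` {y. ltr r y x})"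
    using y0 Vs_bounds[OF assms] by (intro cINF_greatest) auto
  ultimately show ?thesis using False Vs_bounds[OF assms y0] unfolding Tm_def by auto
qed

lemma Vs_lip:
  assumes "\<forall>z. \<bar>f z\<bar> \<le> 1" "\<forall>z. \<bar>g z\<bar> \<le> 1" "\<forall>z. \<bar>f z - g z\<bar> \<le> d" "ltr r y x"
  shows "Vs r f x y \<le> Vs r g x y + d"
proof -
  let ?Z = "{z. \<not> ltr r z y \<and> ltr r z x}"
  have ne: "y \<in> ?Z" using assms(4) by simp
  have bdd: "bdd_above ((\<lambda>z. \<bar>g z\<bar>) ` ?Z)" using assms(2) by (intro bdd_aboveI[where M=1]) auto
  have "\<bar>f z\<bar> \<le> Vs r g x y + d" if "z \<in> ?Z" for z
  proof -
    have "\<bar>g z\<bar> \<le> Vs r g x y" unfolding Vs_def using cSUP_upper[OF that bdd] .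
    moreover have "\<bar>f z\<bar> \<le> \<bar>g z\<bar> + d" using assms(3)[rule_format, of z] by linarith
    ultimately show ?thesis by linarith
  qed
  moreover have nE: "?Z \<noteq> {}" using ne by blast
  ultimately show ?thesis unfolding Vs_def[of r f] by (intro cSUP_least[OF nE]) auto
qed

lemma Tm_lip:
  assumes "\<forall>z. \<bar>f z\<bar> \<le> 1" "\<forall>z. \<bar>g z\<bar> \<le> 1" "\<forall>z. \<bar>f z - g z\<bar> \<le> d"
  shows "Tm r f x \<le> Tm r g x + d"
proof (cases "\<forall>y. \<not> ltr r y x")
  case True
  have "0 \<le> d" using assms(3) by (meson abs_ge_zero order_trans)
  then show ?thesis using True unfolding Tm_def by simp
next
  case False
  then obtain y0 where y0: "ltr r y0 x" by auto
  have bdd: "bdd_below (Vs r f x ` {y. ltr r y x})"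
    using Vs_bounds[OF assms(1)] by (auto intro!: bdd_belowI[where m=0])
  have "Inf (Vs r f x ` {y. ltr r y x}) - d \<le> Vs r g x y" if "ltr r y x" for y
  proof -
    have "Inf (Vs r f x ` {y. ltr r y x}) \<le> Vs r f x y"
      using cINF_lower[OF bdd] that by auto
    then show ?thesis using Vs_lip[OF assms that] by linarith
  qed
  then have "Inf (Vs r f x ` {y. ltr r y x}) - d \<le> Inf (Vs r g x ` {y. ltr r y x})"
    using y0 by (intro cINF_greatest) auto
  then show ?thesis using False unfolding Tm_def by auto
qed


lemma Tm_zero:
  assumes "\<forall>z. \<bar>f z\<bar> \<le> 1" "ltr r y x" "\<forall>z. \<not> ltr r z y \<and> ltr r z x \<longrightarrow> f z = 0"
  shows "Tm r f x = 0"
proof -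
  let ?Z = "{z. \<not> ltr r z y \<and> ltr r z x}"
  have ne: "y \<in> ?Z" using assms(2) by simp
  have nE: "?Z \<noteq> {}" using ne by blast
  have "(\<lambda>z. \<bar>f z\<bar>) ` ?Z = (\<lambda>z. 0) ` ?Z" using assms(3) by (intro image_cong) auto
  also have "\<dots> = {0}" using nE by blast
  finally have "(\<lambda>z. \<bar>f z\<bar>) ` ?Z = {0}" .
  then have V0: "Vs r f x y = 0" unfolding Vs_def by simp
  have bdd: "bdd_below (Vs r f x ` {y. ltr r y x})"
    using Vs_bounds[OF assms(1)] by (auto intro!: bdd_belowI[where m=0])
  have "Inf (Vs r f x ` {y. ltr r y x}) \<le> 0"
    using cINF_lower[OF bdd, of y] assms(2) V0 by auto
  moreover have "\<not> (\<forall>y. \<not> ltr r y x)" using assms(2) by auto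
  ultimately have "Tm r f x \<le> 0" unfolding Tm_def by auto
  then show ?thesis using Tm_bounds[OF assms(1), of r x] by linarith
qed

definition Lset :: "'g rel \<Rightarrow> ('g \<Rightarrow> real) \<Rightarrow> 'g set" where
  "Lset r f = {x. \<forall>y. ltr r y x \<longrightarrow> (\<exists>z. f z \<noteq> 0 \<and> \<not> ltr r z y \<and> ltr r z x)}"

lemma supp_sub:
  assumes "\<forall>z. \<bar>f z\<bar> \<le> 1"
  shows "{x. Tm r f x \<noteq> 0} \<subseteq> Lset r f"
proof
  fix x assume "x \<in> {x. Tm r f x \<noteq> 0}"
  then have nz: "Tm r f x \<noteq> 0" by simp
  show "x \<in> Lset r f"
  proof (rule ccontr)
    assume "x \<notin> Lset r f"
    then obtain y where "ltr r y x" "\<forall>z. \<not> ltr r z y \<and> ltr r z x \<longrightarrow> f z = 0"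
      unfolding Lset_def by auto
    then show False using Tm_zero[OF assms] nz by blast
  qed
qed

definition phi :: "'g rel \<Rightarrow> 'g set \<Rightarrow> 'g \<Rightarrow> 'g option" where
  "phi r S x = (if \<exists>s\<in>S. \<not> ltr r s x then
     Some (SOME s. s \<in> S \<and> \<not> ltr r s x \<and> (\<forall>t. t \<in> S \<and> \<not> ltr r t x \<longrightarrow> \<not> ltr r t s)) else None)"

lemma phi_some:
  assumes wo: "well_order_on UNIV r" and "s0 \<in> S" "\<not> ltr r s0 x"
  shows "\<exists>s. phi r S x = Some s \<and> s \<in> S \<and> \<not> ltr r s x \<and> (\<forall>t. t \<in> S \<and> \<not> ltr r t x \<longrightarrow> \<not> ltr r t s)"
proof -
  have "s0 \<in> {s \<in> S. \<not> ltr r s x}" using assms by simp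
  from lt_min[OF wo this] have ex: "\<exists>s. s \<in> S \<and> \<not> ltr r s x \<and> (\<forall>t. t \<in> S \<and> \<not> ltr r t x \<longrightarrow> \<not> ltr r t s)"
    by blast
  have c: "\<exists>s\<in>S. \<not> ltr r s x" using assms by blast
  show ?thesis unfolding phi_def using c someI_ex[OF ex] by simp
qed

lemma phi_key:
  assumes wo: "well_order_on UNIV r" and x2: "x2 \<in> Lset r f" and lt: "ltr r x1 x2"
  shows "phi r {z. f z \<noteq> 0} x1 \<noteq> phi r {z. f z \<noteq> 0} x2"
proof -
  let ?S = "{z. f z \<noteq> 0}"
  obtain z where z: "f z \<noteq> 0" "\<not> ltr r z x1" "ltr r z x2" using x2 lt unfolding Lset_def by blast
  obtain s1 where s1: "phi r ?S x1 = Some s1" "s1 \<in> ?S" "\<not> ltr r s1 x1"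
    "\<forall>t. t \<in> ?S \<and> \<not> ltr r t x1 \<longrightarrow> \<not> ltr r t s1"
    using phi_some[OF wo, of z ?S x1] z by auto
  have "\<not> ltr r z s1" using s1(4) z by auto
  then have "z = s1 \<or> ltr r s1 z" using lt_total[OF wo, of z s1] by auto
  then have s1x2: "ltr r s1 x2" using z(3) lt_trans[OF wo] by blast
  show ?thesis
  proof (cases "\<exists>s\<in>?S. \<not> ltr r s x2")
    case True
    then obtain s0 where "s0 \<in> ?S" "\<not> ltr r s0 x2" by blast
    then obtain s2 where s2: "phi r ?S x2 = Some s2" "\<not> ltr r s2 x2"
      using phi_some[OF wo, of s0 ?S x2] by blast
    then show ?thesis using s1(1) s1x2 by auto
  next
    case False
    then have "phi r ?S x2 = None" unfolding phi_def by simp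
    then show ?thesis using s1(1) by simp
  qed
qed

lemma phi_inj:
  assumes wo: "well_order_on UNIV r"
  shows "inj_on (phi r {z. f z \<noteq> 0}) (Lset r f)"
proof (rule inj_onI, rule ccontr)
  fix x1 x2 assume a: "x1 \<in> Lset r f" "x2 \<in> Lset r f"
    "phi r {z. f z \<noteq> 0} x1 = phi r {z. f z \<noteq> 0} x2" "x1 \<noteq> x2"
  then consider "ltr r x1 x2" | "ltr r x2 x1" using lt_total[OF wo] by blast
  then show False
  proof cases
    case 1 then show ?thesis using phi_key[OF wo a(2) 1] a(3) by simp
  next
    case 2 then show ?thesis using phi_key[OF wo a(1) 2] a(3) by simp
  qed
qed

lemma small_union:
  assumes inf: "infinite (UNIV :: 'k set)"
    and "|A| \<le>o |UNIV :: 'k set|" "|B| \<le>o |UNIV :: 'k set|"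
  shows "|A \<union> B| \<le>o |UNIV :: 'k set|"
  by (rule card_of_Un_ordLeq_infinite_Field) (simp_all add: assms Field_card_of card_of_Card_order card_of_card_order_on)

lemma Lset_small:
  assumes wo: "well_order_on UNIV r" and inf: "infinite (UNIV :: 'k set)"
    and S: "|{z. f z \<noteq> 0}| \<le>o |UNIV :: 'k set|"
  shows "|Lset r f| \<le>o |UNIV :: 'k set|"
proof -
  let ?S = "{z. f z \<noteq> 0}"
  have "phi r ?S x \<in> {None} \<union> Some ` ?S" for x
  proof (cases "\<exists>s\<in>?S. \<not> ltr r s x")
    case True
    then obtain s0 where "s0 \<in> ?S" "\<not> ltr r s0 x" by blast
    then obtain s where "phi r ?S x = Some s" "s \<in> ?S"
      using phi_some[OF wo, of s0 ?S x] by blast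
    then show ?thesis by blast
  next
    case False
    then have "phi r ?S x = None" unfolding phi_def by (rule if_not_P)
    then show ?thesis by simp
  qed
  then have "phi r ?S ` Lset r f \<subseteq> {None} \<union> Some ` ?S" by (simp add: image_subsetI)
  then have 1: "|Lset r f| \<le>o |{None} \<union> Some ` ?S|"
    using phi_inj[OF wo, of f] card_of_ordLeq by blast
  have 2: "|{None :: 'g option}| \<le>o |UNIV :: 'k set|"
    by (rule card_of_singl_ordLeq) simp
  have 3: "|Some ` ?S| \<le>o |UNIV :: 'k set|"
    using card_of_image[of Some ?S] S ordLeq_transitive by blast
  show ?thesis using 1 small_union[OF inf 2 3] ordLeq_transitive by blast
qed

lemma pad:
  assumes inf: "infinite (UNIV :: 'k set)"
    and less: "|UNIV :: 'k set| <o |UNIV :: 'g set|"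
    and B: "|B :: 'g set| \<le>o |UNIV :: 'k set|"
  shows "\<exists>A. |A| =o |UNIV :: 'k set| \<and> B \<subseteq> A"
proof -
  obtain h :: "'k \<Rightarrow> 'g" where h: "inj h"
    using ordLess_imp_ordLeq[OF less] card_of_ordLeq[of "UNIV :: 'k set" "UNIV :: 'g set"] by auto
  have "bij_betw h UNIV (range h)" using h by (simp add: bij_betw_def)
  then have r1: "|UNIV :: 'k set| =o |range h|" using card_of_ordIso by blast
  then have r2: "|range h| \<le>o |UNIV :: 'k set|" using ordIso_iff_ordLeq ordIso_symmetric by blast
  have u: "|B \<union> range h| \<le>o |UNIV :: 'k set|" using small_union[OF inf B r2] .
  have "|range h| \<le>o |B \<union> range h|" by (rule card_of_mono1) auto
  then have "|UNIV :: 'k set| \<le>o |B \<union> range h|" using r1 ordIso_ordLeq_trans by blast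
  then have "|B \<union> range h| =o |UNIV :: 'k set|" using u ordIso_iff_ordLeq by blast
  then show ?thesis by (intro exI[of _ "B \<union> range h"]) simp
qed

lemma ball_bound:
  assumes "f \<in> unit_ball X" "X \<subseteq> linf"
  shows "\<bar>f z\<bar> \<le> 1"
proof -
  have "bdd_above (range (\<lambda>x. \<bar>f x\<bar>))" using assms unfolding unit_ball_def linf_def by auto
  then have "\<bar>f z\<bar> \<le> supnorm f" unfolding supnorm_def by (rule cSUP_upper[OF UNIV_I])
  then show ?thesis using assms(1) unfolding unit_ball_def by auto
qed

theorem mainTheorem9:
  assumes "infinite (UNIV :: 'k set)"
    and "infinite (UNIV :: 'g set)"
    and "(card_of (UNIV :: 'k set), card_of (UNIV :: 'g set)) \<in> ordLess"
  shows "\<not> BFPP (X0 TYPE('k) :: ('g \<Rightarrow> real) set)"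
proof -
  obtain r :: "'g rel" where wo: "well_order_on UNIV r" using well_order_on by blast
  let ?X = "X0 TYPE('k) :: ('g \<Rightarrow> real) set"
  let ?B = "unit_ball ?X"
  have Xl: "?X \<subseteq> linf" unfolding X0_def by auto
  have bnd: "\<forall>z. \<bar>f z\<bar> \<le> 1" if "f \<in> ?B" for f using ball_bound[OF that Xl] by blast
  have maps: "Tm r f \<in> ?B" if f: "f \<in> ?B" for f
  proof -
    have b: "\<forall>x. \<bar>Tm r f x\<bar> \<le> 1" using Tm_bounds[OF bnd[OF f]] by (simp add: abs_le_iff)
    then have lin: "Tm r f \<in> linf" unfolding linf_def by (auto intro!: bdd_aboveI[where M=1])
    have sn: "supnorm (Tm r f) \<le> 1" unfolding supnorm_def using b by (intro cSUP_least) auto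
    obtain A where A: "|A| =o |UNIV :: 'k set|" "\<forall>x. x \<notin> A \<longrightarrow> f x = 0"
      using f unfolding unit_ball_def X0_def by auto
    have "{z. f z \<noteq> 0} \<subseteq> A" using A(2) by auto
    then have "|{z. f z \<noteq> 0}| \<le>o |UNIV :: 'k set|"
      using card_of_mono1 A(1) ordLeq_ordIso_trans by blast
    then have "|Lset r f| \<le>o |UNIV :: 'k set|" using Lset_small[OF wo assms(1)] by blast
    then obtain A' where A': "|A'| =o |UNIV :: 'k set|" "Lset r f \<subseteq> A'"
      using pad[OF assms(1) assms(3)] by blast
    have "\<forall>x. x \<notin> A' \<longrightarrow> Tm r f x = 0" using A'(2) supp_sub[OF bnd[OF f], of r] by blast
    then show ?thesis using A'(1) lin sn unfolding unit_ball_def X0_def by blast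
  qed
  have ne: "nonexpansive_on ?B (Tm r)"
    unfolding nonexpansive_on_def
  proof (intro ballI)
    fix f g assume f: "f \<in> ?B" and g: "g \<in> ?B"
    let ?d = "supnorm (f - g)"
    have bf: "bdd_above (range (\<lambda>x. \<bar>(f - g) x\<bar>))"
    proof (rule bdd_aboveI[where M=2])
      fix y assume "y \<in> range (\<lambda>x. \<bar>(f - g) x\<bar>)"
      then obtain x where "y = \<bar>f x - g x\<bar>" by auto
      moreover have "\<bar>f x\<bar> \<le> 1" "\<bar>g x\<bar> \<le> 1" using bnd[OF f] bnd[OF g] by auto
      ultimately show "y \<le> 2" by linarith
    qed
    have dz: "\<forall>z. \<bar>f z - g z\<bar> \<le> ?d"
    proof
      fix z show "\<bar>f z - g z\<bar> \<le> ?d"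
        using cSUP_upper[OF _ bf, of z] unfolding supnorm_def by simp
    qed
    have dz': "\<forall>z. \<bar>g z - f z\<bar> \<le> ?d" using dz by (simp add: abs_minus_commute)
    have "\<bar>Tm r f x - Tm r g x\<bar> \<le> ?d" for x
      using Tm_lip[OF bnd[OF f] bnd[OF g] dz, of r x] Tm_lip[OF bnd[OF g] bnd[OF f] dz', of r x]
      by linarith
    then show "supnorm (Tm r f - Tm r g) \<le> supnorm (f - g)"
      unfolding supnorm_def[of "Tm r f - Tm r g"] by (intro cSUP_least) auto
  qed
  have nofix: "Tm r f \<noteq> f" if f: "f \<in> ?B" for f
  proof
    assume fix1: "Tm r f = f"
    have one: "f x = 1" for x
    proof (induction x rule: wf_induct_rule[OF lt_wf[OF wo]])
      case (1 x)
      show ?case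
      proof (cases "\<forall>y. \<not> ltr r y x")
        case True
        then have "Tm r f x = 1" unfolding Tm_def by simp
        then show ?thesis using fix1 by simp
      next
        case False
        have V1: "Vs r f x y = 1" if y: "ltr r y x" for y
        proof -
          let ?Z = "{z. \<not> ltr r z y \<and> ltr r z x}"
          have nE: "?Z \<noteq> {}" using y by (metis (mono_tags, lifting) empty_Collect_eq lt_irrefl)
          have "(\<lambda>z. \<bar>f z\<bar>) ` ?Z = (\<lambda>z. 1) ` ?Z"
          proof (rule image_cong[OF refl])
            fix z assume "z \<in> ?Z"
            then have "ltr r z x" by simp
            then have "f z = 1" using 1 by simp
            then show "\<bar>f z\<bar> = 1" by simp
          qed
          also have "\<dots> = {1}" using nE by blast
          finally show ?thesis unfolding Vs_def by simp
        qed
        have nY: "{y. ltr r y x} \<noteq> {}" using False by blast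
        have "Vs r f x ` {y. ltr r y x} = (\<lambda>y. 1) ` {y. ltr r y x}"
          using V1 by (intro image_cong[OF refl]) simp
        also have "\<dots> = {1}" using nY by blast
        finally have "Vs r f x ` {y. ltr r y x} = {1}" .
        then have "Tm r f x = 1" using False unfolding Tm_def by simp
        then show ?thesis using fix1 by simp
      qed
    qed
    obtain A where A: "|A| =o |UNIV :: 'k set|" "\<forall>x. x \<notin> A \<longrightarrow> f x = 0"
      using f unfolding unit_ball_def X0_def by auto
    have "x \<in> A" for x using A(2) one[of x] by fastforce
    then have "A = UNIV" by blast
    then have "|UNIV :: 'k set| =o |UNIV :: 'g set|" using A(1) ordIso_symmetric by simp
    then show False using not_ordLess_ordIso[OF assms(3)] by blast
  qed
  show ?thesis unfolding BFPP_def
  proof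
    assume H: "\<forall>T. T ` ?B \<subseteq> ?B \<and> nonexpansive_on ?B T \<longrightarrow> (\<exists>f\<in>?B. T f = f)"
    have im: "Tm r ` ?B \<subseteq> ?B" using maps by blast
    obtain f where "f \<in> ?B" "Tm r f = f" using spec[OF H, of "Tm r"] im ne by blast
    then show False using nofix by blast
  qed
qed

end
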